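(* Let $N\ge3$ be odd, $l\in\{0,1\}$, and let $r\ge1$ be an integer with $r+l$ odd. Let $q$ be an integer with $0\le q\le (N-1)/2$, and set $h=2\pi/N$ and $\sigma_k(r)=[\sin(hk/2)/k]^{1+r}$. Define $C_k^{(l)}(r,N,j,t)$ and $H_k^{(l)}(r,N)$ as $$C_k^{(l)}(r,N,j,t)=\sigma_k(r)\cos k(t-t_j^{(l)})+\sum_{m=1}^{\infty}(-1)^{ml}\Bigl[\sigma_{mN+k}(r)\cos(mN+k)(t-t_j^{(l)})+\sigma_{mN-k}(r)\cos(mN-k)(t-t_j^{(l)})\Bigr],$$ $$H_k^{(l)}(r,N)=\sigma_k(r)+\sum_{m=1}^{\infty}(-1)^{ml}\bigl[\sigma_{mN+k}(r)+\sigma_{mN-k}(r)\bigr].$$ Define the fundamental trigonometric LS splines $$ts_{j,q}^{(l)}(r,t)=\frac1N\Bigl\{1+2\sum_{k=1}^{q}\frac{C_k^{(l)}(r,N,j,t)}{H_k^{(l)}(r,N)}\Bigr\},\qquad j=1,\dots,N,$$ and the fundamental trigonometric LS polynomials $$\varphi_{j,q}^{(l)}(t)=\frac1N\Bigl[1+2\sum_{k=1}^q\cos k(t-t_j^{(l)})\Bigr].$$ Then the following hold. 1. For all $i,j\in\{1,\dots,N\}$, $ts_{j,q}^{(l)}(r,t_i^{(l)})=\varphi_{j,q}^{(l)}(t_i^{(l)})$. 2. For any data $f_1,\dots,f_N$, the LS spline $Ts_{r,q}^{(l)}(t)=\sum_{j=1}^N f_j\,ts_{j,q}^{(l)}(r,t)$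 takes at each node $t_i^{(l)}$ the same value as the discrete least-squares trigonometric polynomial $T_q^{(l)}(t)=\sum_{j=1}^N f_j\varphi_{j,q}^{(l)}(t)$.
   Context: Uniform grids on $[0,2\pi]$: for $N$ odd and $j=1,\dots,N$, set $t_j^{(0)}=\frac{2\pi}{N}(j-1)$ and $t_j^{(1)}=\frac{\pi}{N}(2j-1)$. Under the hypothesis that $r+l$ is odd, all constants $H_k^{(l)}(r,N)$ are nonzero, so the definition of $ts_{j,q}^{(l)}$ makes sense. The polynomial $T_q^{(l)}$ coincides with the order-$q$ partial sum $\frac{a_0}{2}+\sum_{k=1}^q(a_k\cos kt+b_k\sin kt)$ of the discrete Fourier series, with coefficients $a_0=\frac2N\sum_j f_j$, $a_k=\frac2N\sum_j f_j\cos kt_j^{(l)}$, and $b_k=\frac2N\sum_j f_j\sin kt_j^{(l)}$. *)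

theory Defs
  imports Complex_Main
begin

definition node :: "nat \<Rightarrow> nat \<Rightarrow> nat \<Rightarrow> real" where
  "node l N j = (if l = 0 then 2 * pi / real N * (real j - 1)
                 else pi / real N * (2 * real j - 1))"

definition sigma :: "nat \<Rightarrow> nat \<Rightarrow> nat \<Rightarrow> real" where
  "sigma N r k = (sin (2 * pi / real N * real k / 2) / real k) ^ (1 + r)"

definition Ck :: "nat \<Rightarrow> nat \<Rightarrow> nat \<Rightarrow> nat \<Rightarrow> real \<Rightarrow> nat \<Rightarrow> real" where
  "Ck l r N j t k =
     sigma N r k * cos (real k * (t - node l N j)) +
     (\<Sum>m. (-1) ^ (Suc m * l) *
        (sigma N r (Suc m * N + k) * cos (real (Suc m * N + k) * (t - node l N j)) +
         sigma N r (Suc m * N - k) * cos (real (Suc m * N - k) * (t - node l N j))))"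

definition Hk :: "nat \<Rightarrow> nat \<Rightarrow> nat \<Rightarrow> nat \<Rightarrow> real" where
  "Hk l r N k =
     sigma N r k +
     (\<Sum>m. (-1) ^ (Suc m * l) * (sigma N r (Suc m * N + k) + sigma N r (Suc m * N - k)))"

definition ts :: "nat \<Rightarrow> nat \<Rightarrow> nat \<Rightarrow> nat \<Rightarrow> nat \<Rightarrow> real \<Rightarrow> real" where
  "ts l q r N j t = 1 / real N * (1 + 2 * (\<Sum>k = 1..q. Ck l r N j t k / Hk l r N k))"

definition phi :: "nat \<Rightarrow> nat \<Rightarrow> nat \<Rightarrow> nat \<Rightarrow> real \<Rightarrow> real" where
  "phi l q N j t = 1 / real N * (1 + 2 * (\<Sum>k = 1..q. cos (real k * (t - node l N j))))"

end

theory Submission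
  imports Defs "HOL-Analysis.Analysis"
begin

lemma sin_shift_pi: "sin (x + pi * real n) = (-1)^n * sin x"
proof (induction n)
  case 0 then show ?case by simp
next
  case (Suc n)
  have "x + pi * real (Suc n) = (x + pi * real n) + pi" by (simp add: algebra_simps)
  then have "sin (x + pi * real (Suc n)) = - sin (x + pi * real n)" by (simp only: sin_periodic_pi)
  then show ?case using Suc.IH by simp
qed

lemma cos_shift_2pi: "cos (x + 2 * pi * of_int n) = cos x"
  by (simp add: cos_add)

lemma pow_bound:
  fixes s B :: real
  assumes "0 \<le> s" "s \<le> 1" "B \<ge> real (Suc m)" "p \<ge> 2"
  shows "(s / B) ^ p \<le> inverse (real (Suc m) ^ 2)"
proof -
  have Bp: "B > 0" using assms(3) by (smt (verit) of_nat_0_less_iff zero_less_Suc)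
  have h0: "0 \<le> s / B" using assms Bp by simp
  have h1: "s / B \<le> 1 / real (Suc m)"
  proof -
    have "s / B \<le> 1 / B" using assms Bp by (intro divide_right_mono) auto
    also have "\<dots> \<le> 1 / real (Suc m)" using assms Bp by (intro divide_left_mono) auto
    finally show ?thesis .
  qed
  have h2: "1 / real (Suc m) \<le> 1" by simp
  have "(s / B) ^ p \<le> (1 / real (Suc m)) ^ p" by (rule power_mono[OF h1 h0])
  also have "\<dots> \<le> (1 / real (Suc m)) ^ 2"
    using assms(4) by (intro power_decreasing) auto
  finally show ?thesis by (simp add: power_one_over inverse_eq_divide)
qed

lemma summable_inv_sq: "summable (\<lambda>m. inverse (real (Suc m) ^ 2))"
proof -
  have "summable (\<lambda>n. inverse (real n ^ 2))" using inverse_power_summable[of 2, where 'a=real] by simp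
  then show ?thesis using summable_Suc_iff[of "\<lambda>n. inverse (real n ^ 2)"] by simp
qed

lemma sigma_bound:
  assumes "r \<ge> 1" "n \<ge> Suc m"
  shows "\<bar>Defs.sigma N r n\<bar> \<le> inverse (real (Suc m) ^ 2)"
proof -
  have "\<bar>Defs.sigma N r n\<bar> = (\<bar>sin (2 * pi / real N * real n / 2)\<bar> / real n) ^ (1 + r)"
    unfolding Defs.sigma_def power_abs abs_divide abs_of_nat by (rule refl)
  also have "\<dots> \<le> inverse (real (Suc m) ^ 2)"
    using assms by (intro pow_bound) auto
  finally show ?thesis .
qed

lemma sigma_plus:
  assumes "N > 0"
  shows "Defs.sigma N r (Suc m * N + k) = ((-1)^(Suc m) * sin (pi * real k / real N) / real (Suc m * N + k)) ^ (1 + r)"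
proof -
  have "2 * pi / real N * real (Suc m * N + k) / 2 = pi * real k / real N + pi * real (Suc m)"
    using assms by (simp add: field_simps)
  then show ?thesis unfolding Defs.sigma_def by (simp only: sin_shift_pi)
qed

lemma sigma_minus:
  assumes "N > 0" "k \<le> N"
  shows "Defs.sigma N r (Suc m * N - k) = ((-1)^(Suc m) * (- sin (pi * real k / real N)) / real (Suc m * N - k)) ^ (1 + r)"
proof -
  have kk: "k \<le> Suc m * N" using assms by (metis le_trans mult_le_mono1 mult_Suc one_le_mult_iff le_add1)
  have "2 * pi / real N * real (Suc m * N - k) / 2 = - (pi * real k / real N) + pi * real (Suc m)"
    using assms kk by (simp add: of_nat_diff field_simps)
  then show ?thesis unfolding Defs.sigma_def by (simp only: sin_shift_pi sin_minus)
qed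

lemma idx_bounds:
  assumes "N > 0" "k < N"
  shows "Suc m \<le> Suc m * N + k" "Suc m \<le> Suc m * N - k"
proof -
  have h: "m \<le> m * N" using assms by simp
  have e: "Suc m * N = N + m * N" by simp
  show "Suc m \<le> Suc m * N + k" "Suc m \<le> Suc m * N - k" unfolding e using assms h by linarith+
qed

lemma summable_H:
  assumes "r \<ge> 1" "N > 0" "k < N"
  shows "summable (\<lambda>m. (-1::real) ^ (Suc m * l) * (Defs.sigma N r (Suc m * N + k) + Defs.sigma N r (Suc m * N - k)))"
proof (rule summable_comparison_test)
  show "summable (\<lambda>m. 2 * inverse (real (Suc m) ^ 2))" using summable_inv_sq by (rule summable_mult)
  show "\<exists>M. \<forall>m\<ge>M. norm ((-1::real) ^ (Suc m * l) * (Defs.sigma N r (Suc m * N + k) + Defs.sigma N r (Suc m * N - k))) \<le> 2 * inverse (real (Suc m) ^ 2)"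
  proof (intro exI allI impI)
    fix m :: nat
    have a: "\<bar>Defs.sigma N r (Suc m * N + k)\<bar> \<le> inverse (real (Suc m) ^ 2)"
      using sigma_bound[OF assms(1) idx_bounds(1)[OF assms(2,3)]] .
    have b: "\<bar>Defs.sigma N r (Suc m * N - k)\<bar> \<le> inverse (real (Suc m) ^ 2)"
      using sigma_bound[OF assms(1) idx_bounds(2)[OF assms(2,3)]] .
    show "norm ((-1::real) ^ (Suc m * l) * (Defs.sigma N r (Suc m * N + k) + Defs.sigma N r (Suc m * N - k))) \<le> 2 * inverse (real (Suc m) ^ 2)"
      using a b by (simp add: abs_mult power_abs)
  qed
qed

lemma neg1_odd_pow: "odd p \<Longrightarrow> ((-1::real) ^ n) ^ p = (-1) ^ n"
  by (metis mult.commute power_mult power_minus_odd power_one)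

lemma Hk_pos:
  assumes r1: "r \<ge> 1" and N0: "N > 0" and l01: "l \<in> {0, 1}" and odd: "odd (r + l)"
    and k1: "1 \<le> k" and k2: "2 * k < N"
  shows "Hk l r N k > 0"
proof -
  define s where "s = sin (pi * real k / real N)"
  define p where "p = 1 + r"
  have kN: "k < N" using k2 by linarith
  have sp: "s > 0" unfolding s_def
    using N0 k1 kN by (intro sin_gt_zero) (auto simp: field_simps)
  have s1: "s \<le> 1" unfolding s_def by simp
  have sk: "Defs.sigma N r k = (s / real k) ^ p"
  proof -
    have "2 * pi / real N * real k / 2 = pi * real k / real N" by simp
    then show ?thesis unfolding Defs.sigma_def s_def p_def by simp
  qed
  have skpos: "Defs.sigma N r k > 0" unfolding sk using sp k1 by simp
  have summ: "summable (\<lambda>m. (-1::real) ^ (Suc m * l) * (Defs.sigma N r (Suc m * N + k) + Defs.sigma N r (Suc m * N - k)))"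
    using summable_H[OF r1 N0 kN] .
  show ?thesis
  proof (cases "l = 0")
    case True
    then have ev: "even p" using odd unfolding p_def by simp
    have nn: "\<And>n. Defs.sigma N r n \<ge> 0" unfolding Defs.sigma_def p_def[symmetric]
      using ev by (rule zero_le_even_power)
    have "0 \<le> (\<Sum>m. (-1::real) ^ (Suc m * l) * (Defs.sigma N r (Suc m * N + k) + Defs.sigma N r (Suc m * N - k)))"
      using summ nn True by (intro suminf_nonneg) auto
    then show ?thesis unfolding Hk_def using skpos by linarith
  next
    case False
    then have l1: "l = 1" using l01 by simp
    then have od: "odd p" using odd unfolding p_def by simp
    have p2: "p \<ge> 2" unfolding p_def using r1 by simp
    define u where "u m = (s / real (Suc m * N - k)) ^ p" for m
    define v where "v m = (s / real (Suc m * N + k)) ^ p" for m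
    have trm: "(-1::real) ^ (Suc m * l) * (Defs.sigma N r (Suc m * N + k) + Defs.sigma N r (Suc m * N - k)) = v m - u m" for m
    proof -
      have a: "Defs.sigma N r (Suc m * N + k) = (-1) ^ (Suc m) * v m"
      proof -
        have "((-1::real) ^ Suc m * s / real (Suc m * N + k)) ^ p = ((-1) ^ Suc m) ^ p * (s / real (Suc m * N + k)) ^ p"
          by (subst power_mult_distrib[symmetric]) simp
        then show ?thesis unfolding sigma_plus[OF N0] v_def p_def[symmetric] s_def[symmetric]
          neg1_odd_pow[OF od] .
      qed
      have b: "Defs.sigma N r (Suc m * N - k) = (-1) ^ m * u m"
      proof -
        have "((-1) ^ Suc m * - s / real (Suc m * N - k)) ^ p = (((-1::real) ^ m) * (s / real (Suc m * N - k))) ^ p"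
          by simp
        also have "\<dots> = ((-1) ^ m) ^ p * u m" unfolding u_def by (rule power_mult_distrib)
        also have "\<dots> = (-1) ^ m * u m" unfolding neg1_odd_pow[OF od] ..
        finally show ?thesis unfolding sigma_minus[OF N0 less_imp_le[OF kN]] p_def[symmetric] s_def[symmetric] .
      qed
      show ?thesis unfolding a b l1 by (cases "even m") (simp_all add: algebra_simps)
    qed
    have ub: "0 \<le> u m \<and> u m \<le> inverse (real (Suc m) ^ 2)" for m
    proof
      show "0 \<le> u m" unfolding u_def using sp by (intro zero_le_power divide_nonneg_nonneg) auto
      have i: "real (Suc m) \<le> real (Suc m * N - k)"
        using idx_bounds(2)[OF N0 kN, of m] by (simp only: of_nat_le_iff)
      show "u m \<le> inverse (real (Suc m) ^ 2)" unfolding u_def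
        by (rule pow_bound[OF _ s1 i p2]) (use sp in simp)
    qed
    have vb: "0 \<le> v m \<and> v m \<le> inverse (real (Suc m) ^ 2)" for m
    proof
      show "0 \<le> v m" unfolding v_def using sp by (intro zero_le_power divide_nonneg_nonneg) auto
      have i: "real (Suc m) \<le> real (Suc m * N + k)"
        using idx_bounds(1)[OF N0 kN, of m] by (simp only: of_nat_le_iff)
      show "v m \<le> inverse (real (Suc m) ^ 2)" unfolding v_def
        by (rule pow_bound[OF _ s1 i p2]) (use sp in simp)
    qed
    have su: "summable u"
      by (rule summable_comparison_test[OF _ summable_inv_sq]) (use ub in auto)
    have sv: "summable v"
      by (rule summable_comparison_test[OF _ summable_inv_sq]) (use vb in auto)
    have su': "summable (\<lambda>m. u (Suc m))" using su summable_Suc_iff by blast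
    have mono: "u (Suc m) \<le> v m" for m
    proof -
      have le: "Suc m * N + k \<le> Suc (Suc m) * N - k" using k2 by simp
      have "real (Suc m * N + k) \<le> real (Suc (Suc m) * N - k)" using le by linarith
      moreover have q1: "0 < real (Suc m * N + k)" using N0 by (simp only: of_nat_0_less_iff) simp
      ultimately have q2: "0 < real (Suc (Suc m) * N - k)" by linarith
      have "s / real (Suc (Suc m) * N - k) \<le> s / real (Suc m * N + k)"
        by (rule divide_left_mono) (use sp q1 q2 \<open>real (Suc m * N + k) \<le> _\<close> in auto)
      then show ?thesis unfolding u_def v_def using sp by (intro power_mono) auto
    qed
    have "(\<Sum>m. (-1::real) ^ (Suc m * l) * (Defs.sigma N r (Suc m * N + k) + Defs.sigma N r (Suc m * N - k)))
          = (\<Sum>m. v m - u m)" using trm by simp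
    also have "\<dots> = suminf v - suminf u" using sv su by (rule suminf_diff[symmetric])
    also have "suminf u = (\<Sum>m. u (Suc m)) + u 0" using suminf_split_head[OF su] by simp
    also have "suminf v - ((\<Sum>m. u (Suc m)) + u 0) = (\<Sum>m. v m - u (Suc m)) - u 0"
      using suminf_diff[OF sv su'] by simp
    finally have eq: "Hk l r N k = Defs.sigma N r k - u 0 + (\<Sum>m. v m - u (Suc m))"
      unfolding Hk_def by simp
    have nn: "(\<Sum>m. v m - u (Suc m)) \<ge> 0"
      using mono by (intro suminf_nonneg summable_diff sv su') auto
    have "u 0 < Defs.sigma N r k"
    proof -
      have kk: "real k < real (N - k)" using k2 by linarith
      have "s / real (N - k) < s / real k" using sp k1 kk by (intro divide_strict_left_mono) auto
      then show ?thesis unfolding sk u_def using sp k2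
        by (intro power_strict_mono) (auto simp: p_def)
    qed
    then show ?thesis using eq nn by linarith
  qed
qed

lemma node_diff:
  assumes "N > 0" "l \<in> {0, 1}"
  shows "node l N i - node l N j = 2 * pi / real N * (real i - real j)"
  using assms unfolding node_def by (auto simp: field_simps)

lemma cos_idx:
  assumes N0: "N > 0" and kN: "k \<le> N"
  shows "cos (real (Suc m * N + k) * (2 * pi / real N * (real i - real j))) = cos (real k * (2 * pi / real N * (real i - real j)))"
    and "cos (real (Suc m * N - k) * (2 * pi / real N * (real i - real j))) = cos (real k * (2 * pi / real N * (real i - real j)))"
proof -
  define d where "d = 2 * pi / real N * (real i - real j)"
  have "real (Suc m * N + k) * d = real k * d + 2 * pi * of_int (int (Suc m) * (int i - int j))"
    unfolding d_def using N0 by (simp add: field_simps)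
  then show "cos (real (Suc m * N + k) * (2 * pi / real N * (real i - real j))) = cos (real k * (2 * pi / real N * (real i - real j)))"
    unfolding d_def[symmetric] by (simp only: cos_shift_2pi)
  have kk: "k \<le> Suc m * N" using kN by (metis le_trans mult_le_mono1 mult_Suc one_le_mult_iff le_add1)
  have "real (Suc m * N - k) * d = - (real k * d) + 2 * pi * of_int (int (Suc m) * (int i - int j))"
    unfolding d_def using N0 kk by (simp add: of_nat_diff field_simps)
  then show "cos (real (Suc m * N - k) * (2 * pi / real N * (real i - real j))) = cos (real k * (2 * pi / real N * (real i - real j)))"
    unfolding d_def[symmetric] by (simp only: cos_shift_2pi cos_minus)
qed

lemma Ck_node:
  assumes N0: "N > 0" and l01: "l \<in> {0, 1}" and r1: "r \<ge> 1" and kN: "k < N"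
  shows "Ck l r N j (node l N i) k = cos (real k * (node l N i - node l N j)) * Hk l r N k"
proof -
  define c where "c = cos (real k * (node l N i - node l N j))"
  have nd: "node l N i - node l N j = 2 * pi / real N * (real i - real j)" by (rule node_diff[OF N0 l01])
  have ext: "(\<lambda>m. (-1::real) ^ (Suc m * l) *
        (Defs.sigma N r (Suc m * N + k) * cos (real (Suc m * N + k) * (node l N i - node l N j)) +
         Defs.sigma N r (Suc m * N - k) * cos (real (Suc m * N - k) * (node l N i - node l N j))))
     = (\<lambda>m. c * ((-1::real) ^ (Suc m * l) * (Defs.sigma N r (Suc m * N + k) + Defs.sigma N r (Suc m * N - k))))"
    unfolding c_def nd cos_idx[OF N0 less_imp_le[OF kN]] by (simp add: algebra_simps)
  show ?thesis unfolding Ck_def Hk_def ext suminf_mult[OF summable_H[OF r1 N0 kN]]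
    by (simp add: c_def algebra_simps)
qed

theorem mainTheorem4:
  fixes N l r q :: nat
  assumes "N \<ge> 3" and "odd N"
    and "l \<in> {0, 1}"
    and "r \<ge> 1" and "odd (r + l)"
    and "q \<le> (N - 1) div 2"
  shows "(\<forall>i\<in>{1..N}. \<forall>j\<in>{1..N}.
            ts l q r N j (node l N i) = phi l q N j (node l N i))
       \<and> (\<forall>f :: nat \<Rightarrow> real. \<forall>i\<in>{1..N}.
            (\<Sum>j = 1..N. f j * ts l q r N j (node l N i))
              = (\<Sum>j = 1..N. f j * phi l q N j (node l N i)))"
proof -
  have N0: "N > 0" using assms(1) by simp
  have eq: "ts l q r N j (node l N i) = phi l q N j (node l N i)" for i j
  proof -
    have "Ck l r N j (node l N i) k / Hk l r N k = cos (real k * (node l N i - node l N j))"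
      if k: "k \<in> {1..q}" for k
    proof -
      have k2: "2 * k < N" using k assms(6) assms(1) by auto
      have "Hk l r N k > 0" using Hk_pos[OF assms(4) N0 assms(3) assms(5)] k k2 by auto
      then show ?thesis using Ck_node[OF N0 assms(3) assms(4)] k2 by simp
    qed
    then have "(\<Sum>k = 1..q. Ck l r N j (node l N i) k / Hk l r N k) = (\<Sum>k = 1..q. cos (real k * (node l N i - node l N j)))"
      by (rule sum.cong[OF refl])
    then show ?thesis unfolding ts_def phi_def by simp
  qed
  show ?thesis using eq by simp
qed

end
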